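(* Under the setting of Algorithm 2 with $f\in\mathcal{H}_k$ and invertible kernel matrices, let $X_n=(x_{(n-1)L+1},\dots,x_{nL})$ be the batch selected at round $n$ and $x^*\in\arg\max_{\mathcal{X}}f$. Then $$\frac1L\sum_{i=1}^L\big(f(x^* )-f(x_{(n-1)L+i})\big)\le2\|f\|_{\mathcal{H}_k}\sqrt{\frac{\operatorname{tr}(\operatorname{cov}_{n-1}(X_n,X_n))}{L}}.$$
   Context: Algorithm 2: $X_n$ maximizes over $X=(z_1,\dots,z_L)\in\mathcal{X}^L$ the quantity $\frac1L\sum_i m_{(n-1)L}(z_i)+\|f\|_{\mathcal{H}_k}\big(2\sqrt{\operatorname{tr}(\operatorname{cov}_{n-1}(X,X))/L}-\sqrt{\mathbf 1^T\operatorname{cov}_{n-1}(X,X)\mathbf 1/L^2}\big)$. Here $m_t(x)=\mathbf{k}_t(x)^T\mathbf{K}_t^{-1}\mathbf{f}_t$ with $\mathbf{k}_t(x)=[k(x,x_i)]_{i\le t}$, $\mathbf{K}_t=[k(x_i,x_j)]_{i,j\le t}$, $\mathbf{f}_t=[f(x_i)]_{i\le t}$; $\overline X_n=\{x_1,\dots,x_{nL}\}$; $\operatorname{cov}_n(X,X)=\mathbf{K}(X,X)-\mathbf{K}(\overline X_n,X)^T\mathbf{K}(\overline X_n,\overline X_n)^{-1}\mathbf{K}(\overline X_n,X)$, $\operatorname{cov}_0=\mathbf{K}(X,X)$. *)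

theory Defs
  imports "HOL-Analysis.Analysis" "Jordan_Normal_Form.Matrix"
begin

text \<open>An RKHS for a kernel k on 'a is represented by a real Hilbert space 'h together with
  the canonical feature map Phi, Phi x = k(x,.), such that k x y = <Phi x, Phi y> and the
  evaluation map h |-> (\<lambda>x. <h, Phi x>) identifying elements of 'h with functions is injective
  (i.e. 'h really is a space of functions on 'a).\<close>

definition is_rkhs :: "('a \<Rightarrow> 'a \<Rightarrow> real) \<Rightarrow> ('a \<Rightarrow> 'h::{real_inner,complete_space}) \<Rightarrow> bool" where
  "is_rkhs k Phi \<longleftrightarrow> (\<forall>x y. k x y = inner (Phi x) (Phi y))
      \<and> inj (\<lambda>h. (\<lambda>x. inner h (Phi x)))"

definition rkhs_fun :: "('a \<Rightarrow> 'h::real_inner) \<Rightarrow> 'h \<Rightarrow> ('a \<Rightarrow> real)" where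
  "rkhs_fun Phi h = (\<lambda>x. inner h (Phi x))"

definition in_rkhs :: "('a \<Rightarrow> 'h::real_inner) \<Rightarrow> ('a \<Rightarrow> real) \<Rightarrow> bool" where
  "in_rkhs Phi f \<longleftrightarrow> (\<exists>h. f = rkhs_fun Phi h)"

definition rkhs_norm :: "('a \<Rightarrow> 'h::real_inner) \<Rightarrow> ('a \<Rightarrow> real) \<Rightarrow> real" where
  "rkhs_norm Phi f = norm (THE h. f = rkhs_fun Phi h)"

definition kmat :: "('a \<Rightarrow> 'a \<Rightarrow> real) \<Rightarrow> 'a list \<Rightarrow> 'a list \<Rightarrow> real mat" where
  "kmat k xs ys = mat (length xs) (length ys) (\<lambda>(i,j). k (xs ! i) (ys ! j))"

definition mat_inv :: "real mat \<Rightarrow> real mat" where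
  "mat_inv A = (SOME B. B \<in> carrier_mat (dim_row A) (dim_row A) \<and> inverts_mat A B \<and> inverts_mat B A)"

definition mat_trace :: "real mat \<Rightarrow> real" where
  "mat_trace A = (\<Sum>i<dim_row A. A $$ (i,i))"

definition mat_entry_sum :: "real mat \<Rightarrow> real" where
  "mat_entry_sum A = (\<Sum>i<dim_row A. \<Sum>j<dim_col A. A $$ (i,j))"

text \<open>The queried points are x 1, x 2, ... (1-based); Xbar t = [x 1, ..., x t].\<close>
definition Xbar :: "(nat \<Rightarrow> 'a) \<Rightarrow> nat \<Rightarrow> 'a list" where
  "Xbar x t = map x [1..<t+1]"

definition post_mean :: "('a \<Rightarrow> 'a \<Rightarrow> real) \<Rightarrow> ('a \<Rightarrow> real) \<Rightarrow> (nat \<Rightarrow> 'a) \<Rightarrow> nat \<Rightarrow> 'a \<Rightarrow> real" where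
  "post_mean k f x t z =
     vec t (\<lambda>i. k z (Xbar x t ! i)) \<bullet> (mat_inv (kmat k (Xbar x t) (Xbar x t)) *\<^sub>v vec t (\<lambda>i. f (Xbar x t ! i)))"

text \<open>posterior covariance cov_n(X,X) after n batches of size L (n = 0 gives K(X,X))\<close>
definition post_cov :: "('a \<Rightarrow> 'a \<Rightarrow> real) \<Rightarrow> (nat \<Rightarrow> 'a) \<Rightarrow> nat \<Rightarrow> nat \<Rightarrow> 'a list \<Rightarrow> real mat" where
  "post_cov k x L n X =
     kmat k X X - transpose_mat (kmat k (Xbar x (n*L)) X)
        * mat_inv (kmat k (Xbar x (n*L)) (Xbar x (n*L))) * kmat k (Xbar x (n*L)) X"

definition acq :: "('a \<Rightarrow> 'a \<Rightarrow> real) \<Rightarrow> ('a \<Rightarrow> real) \<Rightarrow> real \<Rightarrow> (nat \<Rightarrow> 'a) \<Rightarrow> nat \<Rightarrow> nat \<Rightarrow> 'a list \<Rightarrow> real" where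
  "acq k f fnorm x L n X =
     (1 / real L) * (\<Sum>i<L. post_mean k f x ((n-1)*L) (X ! i))
     + fnorm * (2 * sqrt (mat_trace (post_cov k x L (n-1) X) / real L)
                - sqrt (mat_entry_sum (post_cov k x L (n-1) X) / (real L)^2))"

definition batch :: "(nat \<Rightarrow> 'a) \<Rightarrow> nat \<Rightarrow> nat \<Rightarrow> 'a list" where
  "batch x L n = map x [(n-1)*L+1..<n*L+1]"

end

theory Submission
  imports Defs
begin

lemma resid_inner:
  fixes Phi :: "'a \<Rightarrow> 'h::real_inner" and k :: "'a \<Rightarrow> 'a \<Rightarrow> real"
    and p :: "nat \<Rightarrow> 'a" and B :: "nat \<Rightarrow> nat \<Rightarrow> real"
  assumes kk: "\<And>u v. k u v = inner (Phi u) (Phi v)"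
    and BK: "\<And>a c. a<t \<Longrightarrow> c<t \<Longrightarrow> (\<Sum>b<t. B a b * k (p b) (p c)) = (if a = c then 1 else 0)"
  shows "inner (Phi z - (\<Sum>b<t. (\<Sum>a<t. B a b * k (p a) z) *\<^sub>R Phi (p b)))
               (Phi w - (\<Sum>b<t. (\<Sum>a<t. B a b * k (p a) w) *\<^sub>R Phi (p b)))
         = k z w - (\<Sum>a<t. \<Sum>b<t. k (p a) z * B a b * k (p b) w)"
proof -
  define \<beta> where "\<beta> z b = (\<Sum>a<t. B a b * k (p a) z)" for z b
  define S where "S z = (\<Sum>b<t. \<beta> z b *\<^sub>R Phi (p b))" for z
  have ks: "k u v = k v u" for u v by (simp add: kk inner_commute)
  have 1: "inner (Phi u) (S w) = (\<Sum>b<t. \<beta> w b * k u (p b))" for u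
    by (simp add: S_def inner_sum_right kk)
  have 2: "inner (S z) (Phi w) = (\<Sum>b<t. \<beta> z b * k (p b) w)"
    by (simp add: S_def inner_sum_left kk)
  have 3: "inner (S z) (S w) = (\<Sum>b<t. \<beta> z b * (\<Sum>c<t. \<beta> w c * k (p b) (p c)))"
  proof -
    have "inner (S z) (S w) = (\<Sum>b<t. inner (\<beta> z b *\<^sub>R Phi (p b)) (S w))"
      unfolding S_def[of z] by (rule inner_sum_left)
    also have "\<dots> = (\<Sum>b<t. \<beta> z b * inner (Phi (p b)) (S w))"
      by simp
    finally show ?thesis unfolding 1 .
  qed
  have 4: "(\<Sum>b<t. \<beta> z b * k (p b) (p c)) = k (p c) z" if c: "c < t" for c
  proof -
    have "(\<Sum>b<t. \<beta> z b * k (p b) (p c)) = (\<Sum>b<t. \<Sum>a<t. k (p a) z * (B a b * k (p b) (p c)))"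
      by (simp add: \<beta>_def sum_distrib_right sum_distrib_left mult_ac)
    also have "\<dots> = (\<Sum>a<t. k (p a) z * (\<Sum>b<t. B a b * k (p b) (p c)))"
      by (subst sum.swap) (simp add: sum_distrib_left)
    also have "\<dots> = (\<Sum>a<t. k (p a) z * (if a = c then 1 else 0))"
      using BK c by simp
    also have "\<dots> = k (p c) z" using c by (simp add: if_distrib cong: if_cong)
    finally show ?thesis .
  qed
  have three: "inner (S z) (S w) = inner (Phi z) (S w)"
  proof -
    have "(\<Sum>b<t. \<beta> z b * (\<Sum>c<t. \<beta> w c * k (p b) (p c)))
        = (\<Sum>b<t. \<Sum>c<t. \<beta> w c * (\<beta> z b * k (p b) (p c)))"
      by (simp add: sum_distrib_left mult_ac)
    also have "\<dots> = (\<Sum>c<t. \<Sum>b<t. \<beta> w c * (\<beta> z b * k (p b) (p c)))"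
      by (rule sum.swap)
    also have "\<dots> = (\<Sum>c<t. \<beta> w c * (\<Sum>b<t. \<beta> z b * k (p b) (p c)))"
      by (simp add: sum_distrib_left)
    also have "\<dots> = (\<Sum>c<t. \<beta> w c * k (p c) z)"
      by (rule sum.cong[OF refl]) (simp add: 4)
    also have "\<dots> = (\<Sum>c<t. \<beta> w c * k z (p c))"
      by (rule sum.cong[OF refl]) (metis ks)
    finally have cc: "(\<Sum>b<t. \<beta> z b * (\<Sum>c<t. \<beta> w c * k (p b) (p c))) = (\<Sum>c<t. \<beta> w c * k z (p c))" .
    show ?thesis unfolding 1 3 by (rule cc)
  qed
  have 5: "inner (S z) (Phi w) = (\<Sum>a<t. \<Sum>b<t. k (p a) z * B a b * k (p b) w)"
    unfolding 2 \<beta>_def by (subst sum.swap) (simp add: sum_distrib_right sum_distrib_left mult_ac)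
  have "inner (Phi z - S z) (Phi w - S w) = k z w - inner (S z) (Phi w)"
    using three by (simp add: inner_diff_left inner_diff_right kk inner_commute)
  then show ?thesis using 5 unfolding S_def \<beta>_def by simp
qed


lemma resid_mean:
  fixes Phi :: "'a \<Rightarrow> 'h::real_inner" and k :: "'a \<Rightarrow> 'a \<Rightarrow> real"
    and p :: "nat \<Rightarrow> 'a" and B :: "nat \<Rightarrow> nat \<Rightarrow> real"
  assumes kk: "\<And>u v. k u v = inner (Phi u) (Phi v)"
  shows "inner h (Phi z - (\<Sum>b<t. (\<Sum>a<t. B a b * k (p a) z) *\<^sub>R Phi (p b)))
         = inner h (Phi z) - (\<Sum>a<t. \<Sum>b<t. k z (p a) * B a b * inner h (Phi (p b)))"
proof -
  have ks: "k u v = k v u" for u v by (simp add: kk inner_commute)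
  have "inner h (\<Sum>b<t. (\<Sum>a<t. B a b * k (p a) z) *\<^sub>R Phi (p b))
      = (\<Sum>b<t. \<Sum>a<t. k (p a) z * B a b * inner h (Phi (p b)))"
    by (simp add: inner_sum_right sum_distrib_right sum_distrib_left mult_ac)
  also have "\<dots> = (\<Sum>a<t. \<Sum>b<t. k (p a) z * B a b * inner h (Phi (p b)))"
    by (rule sum.swap)
  also have "\<dots> = (\<Sum>a<t. \<Sum>b<t. k z (p a) * B a b * inner h (Phi (p b)))"
    by (metis ks)
  finally show ?thesis by (simp add: inner_diff_right)
qed

lemma mat_inv_props:
  fixes K :: "real mat"
  assumes inv: "invertible_mat K" and K: "K \<in> carrier_mat t t"
  shows "mat_inv K \<in> carrier_mat t t \<and> mat_inv K * K = 1\<^sub>m t"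
proof -
  from inv obtain B where KB: "K * B = 1\<^sub>m (dim_row K)" and BK: "B * K = 1\<^sub>m (dim_row B)"
    unfolding invertible_mat_def inverts_mat_def by blast
  have "dim_col B = t" using arg_cong[OF KB, of dim_col] K by simp
  moreover have "dim_row B = t" using arg_cong[OF BK, of dim_col] K by simp
  ultimately have P: "B \<in> carrier_mat (dim_row K) (dim_row K) \<and> inverts_mat K B \<and> inverts_mat B K"
    using K KB BK unfolding inverts_mat_def by auto
  have "mat_inv K \<in> carrier_mat (dim_row K) (dim_row K) \<and> inverts_mat K (mat_inv K) \<and> inverts_mat (mat_inv K) K"
    unfolding mat_inv_def by (rule someI[of _ B]) (rule P)
  then show ?thesis using K unfolding inverts_mat_def by auto
qed

lemma post_mean_formula:
  assumes B: "mat_inv (kmat k (Xbar x t) (Xbar x t)) \<in> carrier_mat t t"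
  shows "post_mean k f x t z = (\<Sum>a<t. \<Sum>b<t. k z (Xbar x t ! a) * mat_inv (kmat k (Xbar x t) (Xbar x t)) $$ (a,b) * f (Xbar x t ! b))"
  using B unfolding post_mean_def
  by (simp add: scalar_prod_def lessThan_atLeast0 sum_distrib_left mult_ac)

lemma cov_entry:
  fixes ps X :: "'a list"
  assumes B: "mat_inv (kmat k ps ps) \<in> carrier_mat (length ps) (length ps)"
    and i: "i < length X" and j: "j < length X"
  shows "(kmat k X X - transpose_mat (kmat k ps X) * mat_inv (kmat k ps ps) * kmat k ps X) $$ (i,j)
        = k (X!i) (X!j) - (\<Sum>a<length ps. \<Sum>b<length ps. k (ps!a) (X!i) * mat_inv (kmat k ps ps) $$ (a,b) * k (ps!b) (X!j))"
  using B i j unfolding kmat_def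
  by (simp add: scalar_prod_def lessThan_atLeast0 sum_distrib_left) (subst sum.swap, simp add: sum_distrib_left mult_ac)


lemma sum_1_shift: "(\<Sum>i=1..m. g i) = (\<Sum>i<m. g (i+1::nat))"
  by (induction m) (auto simp: atLeastAtMostSuc_conv add.commute)

theorem mainTheorem12:
  fixes k :: "'a \<Rightarrow> 'a \<Rightarrow> real"
    and Phi :: "'a \<Rightarrow> 'h::{real_inner,complete_space}"
    and f :: "'a \<Rightarrow> real"
    and D :: "'a set"
    and x :: "nat \<Rightarrow> 'a"
    and L n :: nat
    and xstar :: 'a
  assumes rkhs: "is_rkhs k Phi"
    and f_in: "in_rkhs Phi f"
    and L_pos: "L \<ge> 1"
    and n_pos: "n \<ge> 1"
    and invertible: "\<And>m. 1 \<le> m \<Longrightarrow> m \<le> n \<Longrightarrow>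
                       invertible_mat (kmat k (Xbar x ((m-1)*L)) (Xbar x ((m-1)*L)))"
    and in_dom: "\<And>m. 1 \<le> m \<Longrightarrow> m \<le> n \<Longrightarrow> set (batch x L m) \<subseteq> D"
    and alg2: "\<And>m Z. 1 \<le> m \<Longrightarrow> m \<le> n \<Longrightarrow> length Z = L \<Longrightarrow> set Z \<subseteq> D \<Longrightarrow>
                 acq k f (rkhs_norm Phi f) x L m Z \<le> acq k f (rkhs_norm Phi f) x L m (batch x L m)"
    and xstar_mem: "xstar \<in> D"
    and xstar_max: "\<And>z. z \<in> D \<Longrightarrow> f z \<le> f xstar"
  shows "(1 / real L) * (\<Sum>i=1..L. f xstar - f (x ((n-1)*L + i)))
           \<le> 2 * rkhs_norm Phi f * sqrt (mat_trace (post_cov k x L (n-1) (batch x L n)) / real L)"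
proof -
  obtain h where hf: "f = rkhs_fun Phi h" using f_in unfolding in_rkhs_def by blast
  have kk: "\<And>u v. k u v = inner (Phi u) (Phi v)" and inj: "inj (\<lambda>h. (\<lambda>x. inner h (Phi x)))"
    using rkhs unfolding is_rkhs_def by auto
  have fv: "f u = inner h (Phi u)" for u using hf unfolding rkhs_fun_def by simp
  have fnorm: "rkhs_norm Phi f = norm h"
  proof -
    have "(THE h'. f = rkhs_fun Phi h') = h"
    proof (rule the_equality)
      show "f = rkhs_fun Phi h" by (rule hf)
      fix h' assume "f = rkhs_fun Phi h'"
      then have e: "(\<lambda>x. inner h' (Phi x)) = (\<lambda>x. inner h (Phi x))" using hf unfolding rkhs_fun_def by simp
      show "h' = h" using inj e unfolding inj_def by blast
    qed
    then show ?thesis unfolding rkhs_norm_def by simp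
  qed
  define t where "t = (n-1)*L"
  define ps where "ps = Xbar x t"
  define K where "K = kmat k ps ps"
  define M where "M = mat_inv K"
  have lps: "length ps = t" unfolding ps_def Xbar_def by simp
  have Kc: "K \<in> carrier_mat t t" unfolding K_def kmat_def lps by simp
  have Kinv: "invertible_mat K" using invertible[of n] n_pos unfolding K_def ps_def t_def by simp
  have Mc: "M \<in> carrier_mat t t" and MK: "M * K = 1\<^sub>m t"
    using mat_inv_props[OF Kinv Kc] unfolding M_def by auto
  define p where "p j = ps ! j" for j
  define Bf where "Bf a b = M $$ (a,b)" for a b
  have BK: "(\<Sum>b<t. Bf a b * k (p b) (p c)) = (if a = c then 1 else 0)" if "a < t" "c < t" for a c
  proof -
    have "(M * K) $$ (a,c) = (if a = c then 1 else 0)" using MK that by simp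
    moreover have "(M * K) $$ (a,c) = (\<Sum>b<t. Bf a b * k (p b) (p c))"
      using that Mc Kc unfolding K_def kmat_def Bf_def p_def
      by (simp add: scalar_prod_def lps lessThan_atLeast0)
    ultimately show ?thesis by simp
  qed
  define r where "r z = Phi z - (\<Sum>b<t. (\<Sum>a<t. Bf a b * k (p a) z) *\<^sub>R Phi (p b))" for z
  have rr: "inner (r z) (r w) = k z w - (\<Sum>a<t. \<Sum>b<t. k (p a) z * Bf a b * k (p b) w)" for z w
    unfolding r_def by (rule resid_inner[where k=k and Phi=Phi and p=p and B=Bf and t=t, OF kk BK])
  have pm: "post_mean k f x t z = f z - inner h (r z)" for z
  proof -
    have "post_mean k f x t z = (\<Sum>a<t. \<Sum>b<t. k z (p a) * Bf a b * f (p b))"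
      using post_mean_formula[of k x t f z] Mc unfolding M_def K_def ps_def p_def Bf_def by simp
    then show ?thesis unfolding r_def using resid_mean[where k=k and Phi=Phi and h=h and p=p and t=t and B=Bf and z=z, OF kk] by (simp add: fv)
  qed
  define C where "C X = post_cov k x L (n-1) X" for X
  have Cdim: "dim_row (C X) = length X" "dim_col (C X) = length X" for X
    unfolding C_def post_cov_def kmat_def by simp_all
  have Cent: "C X $$ (i,j) = inner (r (X!i)) (r (X!j))" if "i < length X" "j < length X" for X i j
  proof -
    have "C X $$ (i,j) = k (X!i) (X!j) - (\<Sum>a<length ps. \<Sum>b<length ps. k (ps!a) (X!i) * mat_inv (kmat k ps ps) $$ (a,b) * k (ps!b) (X!j))"
      unfolding C_def post_cov_def t_def[symmetric] ps_def[symmetric]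
      by (rule cov_entry) (use Mc that in \<open>auto simp: M_def K_def lps\<close>)
    then show ?thesis unfolding rr by (simp add: lps p_def Bf_def M_def K_def)
  qed
  have tr: "mat_trace (C X) = (\<Sum>i<length X. inner (r (X!i)) (r (X!i)))" for X
    unfolding mat_trace_def Cdim using Cent by simp
  have es: "mat_entry_sum (C X) = (norm (\<Sum>i<length X. r (X!i)))^2" for X
  proof -
    have "mat_entry_sum (C X) = (\<Sum>i<length X. \<Sum>j<length X. inner (r (X!i)) (r (X!j)))"
      unfolding mat_entry_sum_def Cdim using Cent by simp
    also have "\<dots> = inner (\<Sum>i<length X. r (X!i)) (\<Sum>j<length X. r (X!j))"
      by (simp add: inner_sum_left inner_sum_right) (rule sum.swap)
    finally show ?thesis by (simp add: power2_norm_eq_inner)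
  qed
  have Lr: "real L > 0" using L_pos by simp
  define Z where "Z = replicate L xstar"
  define \<sigma> where "\<sigma> = norm (r xstar)"
  have accZ: "acq k f (rkhs_norm Phi f) x L n Z = post_mean k f x t xstar + norm h * \<sigma>"
  proof -
    have "mat_trace (C Z) = real L * \<sigma>^2" unfolding tr Z_def \<sigma>_def
      by (simp add: power2_norm_eq_inner)
    moreover have "mat_entry_sum (C Z) = (real L * \<sigma>)^2" unfolding es Z_def \<sigma>_def by (simp add: sum_constant_scaleR)
    ultimately have "mat_trace (C Z) / real L = \<sigma>^2" "mat_entry_sum (C Z) / (real L)^2 = \<sigma>^2"
      using Lr by (auto simp: power_mult_distrib)
    moreover have "\<sigma> \<ge> 0" unfolding \<sigma>_def by simp
    ultimately show ?thesis
      unfolding acq_def C_def[symmetric] fnorm t_def[symmetric] using Lr by (simp add: Z_def)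
  qed
  define Xn where "Xn = batch x L n"
  have nL: "n * L = (n-1)*L + L" using n_pos by (cases n) auto
  have lX: "length Xn = L" unfolding Xn_def batch_def using nL by simp
  have Xnth: "Xn ! i = x ((n-1)*L + (i+1))" if "i < L" for i
    unfolding Xn_def batch_def nL using that by (simp del: upt_Suc)
  define R where "R = (\<Sum>i<L. r (Xn!i))"
  have accX: "acq k f (rkhs_norm Phi f) x L n Xn
     = (1 / real L) * ((\<Sum>i<L. f (Xn!i)) - inner h R)
       + norm h * (2 * sqrt (mat_trace (C Xn) / real L) - norm R / real L)"
  proof -
    have "(\<Sum>i<L. post_mean k f x t (Xn!i)) = (\<Sum>i<L. f (Xn!i)) - inner h R"
      unfolding pm R_def by (simp add: sum_subtractf inner_sum_right)
    moreover have "sqrt (mat_entry_sum (C Xn) / (real L)^2) = norm R / real L"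
      unfolding es lX R_def[symmetric] using Lr
      by (simp add: real_sqrt_divide)
    ultimately show ?thesis
      unfolding acq_def C_def[symmetric] fnorm t_def[symmetric] by simp
  qed
  have cmp: "acq k f (rkhs_norm Phi f) x L n Z \<le> acq k f (rkhs_norm Phi f) x L n Xn"
    unfolding Xn_def by (rule alg2) (use n_pos xstar_mem in \<open>auto simp: Z_def\<close>)
  have cs1: "inner h (r xstar) \<le> norm h * \<sigma>"
    unfolding \<sigma>_def by (rule norm_cauchy_schwarz)
  have cs2: "- inner h R \<le> norm h * norm R"
    using norm_cauchy_schwarz[of h "-R"] by simp
  have cs3: "(1/real L)*(-inner h R) \<le> (1/real L)*(norm h*norm R)"
    by (rule mult_left_mono[OF cs2]) (use Lr in simp)
  have fx: "f xstar = post_mean k f x t xstar + inner h (r xstar)" using pm by simp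
  have main: "f xstar \<le> (1 / real L) * (\<Sum>i<L. f (Xn!i)) + 2 * norm h * sqrt (mat_trace (C Xn) / real L)"
  proof -
    have "f xstar \<le> acq k f (rkhs_norm Phi f) x L n Xn" using fx cs1 accZ cmp by linarith
    also have "\<dots> = (1 / real L) * (\<Sum>i<L. f (Xn!i)) + (1 / real L) * (- inner h R)
       + 2 * norm h * sqrt (mat_trace (C Xn) / real L) - norm h * norm R / real L"
      unfolding accX by (simp add: algebra_simps)
    also have "\<dots> \<le> (1 / real L) * (\<Sum>i<L. f (Xn!i)) + (1 / real L) * (norm h * norm R)
       + 2 * norm h * sqrt (mat_trace (C Xn) / real L) - norm h * norm R / real L"
      using cs3 by linarith
    finally show ?thesis by simp
  qed
  have "(\<Sum>i=1..L. f xstar - f (x ((n-1)*L + i))) = (\<Sum>i<L. f xstar - f (Xn!i))"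
    unfolding sum_1_shift by (rule sum.cong) (auto simp: Xnth)
  also have "\<dots> = real L * f xstar - (\<Sum>i<L. f (Xn!i))" by (simp add: sum_subtractf)
  finally have "(1 / real L) * (\<Sum>i=1..L. f xstar - f (x ((n-1)*L + i)))
      = f xstar - (1 / real L) * (\<Sum>i<L. f (Xn!i))"
    using Lr by (simp add: field_simps)
  also have "\<dots> \<le> 2 * norm h * sqrt (mat_trace (C Xn) / real L)" using main by simp
  finally show ?thesis unfolding fnorm C_def Xn_def .
qed

end
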